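(* Let $f$ be a critically coalescing quadratic rational map with critical values $v_1,v_2$. Set $\beta_j=f^j(v_1)$ for $j\ge1$ (so $\beta_1=f(v_1)=f(v_2)$), and suppose that the forward orbit of $v_1$ contains a fixed point $\alpha$ of $f$; let $m$ be minimal with $f^m(v_1)=\alpha$, and assume $m>2$. Let $k>m$. Then, counting critical points of $f^k$ lying in fibers $f^{-k}(z)$: (i) $f^{-k}(z)$ contains exactly $2^{k-1}$ critical points of $f^k$ if and only if $z\in\{v_1,v_2,\beta_1\}$; (ii) for each $2\le j\le m-1$, $f^{-k}(\beta_j)$ contains exactly $2^{k-j}$ critical points of $f^k$; (iii) $f^{-k}(\alpha)$ contains exactly $2^{k-(m-1)}-2$ critical points of $f^k$.
   Context: A quadratic rational map with critical values $v_1\ne v_2$ is critically coalescing if $f(v_1)=f(v_2)$. $f^k$ denotes the $k$-th iterate and $f^{-k}(z)$ the full preimage of $z$ under $f^k$. *)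

theory Defs
  imports Complex_Main "HOL-Computational_Algebra.Polynomial"
begin

text \<open>The Riemann sphere is modelled as complex option; None is the point at infinity.\<close>

type_synonym sphere = "complex option"

definition rat_eval :: "complex poly \<Rightarrow> complex poly \<Rightarrow> sphere \<Rightarrow> sphere" where
  "rat_eval p q w = (case w of
      Some z \<Rightarrow> (if poly q z \<noteq> 0 then Some (poly p z / poly q z) else None)
    | None \<Rightarrow> (if degree p > degree q then None
               else if degree p = degree q then Some (lead_coeff p / lead_coeff q)
               else Some 0))"

definition quadratic_rational_map :: "(sphere \<Rightarrow> sphere) \<Rightarrow> bool" where
  "quadratic_rational_map f \<longleftrightarrow>
     (\<exists>p q. q \<noteq> 0 \<and> coprime p q \<and> max (degree p) (degree q) = 2 \<and> f = rat_eval p q)"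

fun chart :: "sphere \<Rightarrow> sphere \<Rightarrow> complex" where
  "chart (Some a) (Some z) = z"
| "chart (Some a) None = 0"
| "chart None (Some z) = 1 / z"
| "chart None None = 0"

fun unchart :: "sphere \<Rightarrow> complex \<Rightarrow> sphere" where
  "unchart (Some a) z = Some z"
| "unchart None z = (if z = 0 then None else Some (1 / z))"

definition critical_point :: "(sphere \<Rightarrow> sphere) \<Rightarrow> sphere \<Rightarrow> bool" where
  "critical_point g w \<longleftrightarrow>
     ((\<lambda>z. chart (g w) (g (unchart w z))) has_field_derivative 0) (at (chart w w))"

definition critical_value :: "(sphere \<Rightarrow> sphere) \<Rightarrow> sphere \<Rightarrow> bool" where
  "critical_value g v \<longleftrightarrow> (\<exists>c. critical_point g c \<and> g c = v)"

definition crit_in_fiber :: "(sphere \<Rightarrow> sphere) \<Rightarrow> nat \<Rightarrow> sphere \<Rightarrow> nat" where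
  "crit_in_fiber f k z = card {w. (f ^^ k) w = z \<and> critical_point (f ^^ k) w}"

end

theory Submission
  imports Defs
begin


lemma quad_zeros:
  fixes g2 g1 g0 :: complex
  assumes nz: "\<not>(g2 = 0 \<and> g1 = 0 \<and> g0 = 0)"
  defines "Z \<equiv> {w. case w of None \<Rightarrow> g2 = 0 | Some a \<Rightarrow> g2*a^2+g1*a+g0 = 0}"
  shows "(g1^2 - 4*g0*g2 = 0 \<longrightarrow> (\<exists>x. Z = {x})) \<and> (g1^2-4*g0*g2 \<noteq> 0 \<longrightarrow> finite Z \<and> card Z = 2)"
proof (cases "g2 = 0")
  case False
  define s where "s = csqrt (g1^2 - 4*g0*g2)"
  have s2: "s^2 = g1^2 - 4*g0*g2" unfolding s_def by simp
  define r1 where "r1 = (-g1+s)/(2*g2)"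
  define r2 where "r2 = (-g1-s)/(2*g2)"
  have key: "g2*a^2+g1*a+g0 = 0 \<longleftrightarrow> a = r1 \<or> a = r2" for a
  proof -
    have "g2*a^2+g1*a+g0 = 0 \<longleftrightarrow> 4*g2*(g2*a^2+g1*a+g0) = 0" using False by simp
    also have "4*g2*(g2*a^2+g1*a+g0) = (2*g2*a+g1 - s)*(2*g2*a+g1+s)"
      using s2 by (simp add: algebra_simps power2_eq_square)
    also have "(2*g2*a+g1 - s)*(2*g2*a+g1+s) = 0 \<longleftrightarrow> (2*g2*a+g1 - s = 0 \<or> 2*g2*a+g1+s = 0)" by simp
    also have "(2*g2*a+g1 - s = 0) \<longleftrightarrow> a = r1"
    proof -
      have "2*g2*a+g1 - s = 2*g2*(a - r1)" using False unfolding r1_def by (simp add: field_simps)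
      thus ?thesis using False by simp
    qed
    also have "(2*g2*a+g1 + s = 0) \<longleftrightarrow> a = r2"
    proof -
      have "2*g2*a+g1 + s = 2*g2*(a - r2)" using False unfolding r2_def by (simp add: field_simps)
      thus ?thesis using False by simp
    qed
    finally show ?thesis .
  qed
  have Z: "Z = {Some r1, Some r2}"
    unfolding Z_def using False key by (auto split: option.splits)
  have "r1 = r2 \<longleftrightarrow> s = 0" using False unfolding r1_def r2_def by (auto simp: field_simps)
  moreover have "s = 0 \<longleftrightarrow> g1^2 - 4*g0*g2 = 0" using s2 by (metis power_eq_0_iff zero_power2)
  ultimately show ?thesis using Z by auto
next
  case True
  show ?thesis
  proof (cases "g1 = 0")
    case False
    have Z: "Z = {None, Some (-g0/g1)}" unfolding Z_def using True False
      by (auto split: option.splits simp: field_simps) (metis add.commute add_eq_0_iff)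
    then show ?thesis using True False by auto
  next
    case g1: True
    have Z: "Z = {None}" unfolding Z_def using True g1 nz by (auto split: option.splits)
    then show ?thesis using True g1 by auto
  qed
qed

lemma quad_ne:
  fixes g2 g1 g0 :: complex
  assumes nz: "\<not>(g2 = 0 \<and> g1 = 0 \<and> g0 = 0)"
  shows "{w. case w of None \<Rightarrow> g2 = 0 | Some a \<Rightarrow> g2*a^2+g1*a+g0 = 0} \<noteq> {}"
proof (cases "g1^2 - 4*g0*g2 = 0")
  case True
  then obtain x where "{w. case w of None \<Rightarrow> g2 = 0 | Some a \<Rightarrow> g2*a^2+g1*a+g0 = 0} = {x}"
    using quad_zeros[OF nz] by blast
  then show ?thesis by simp
next
  case False
  then have "card {w. case w of None \<Rightarrow> g2 = 0 | Some a \<Rightarrow> g2*a^2+g1*a+g0 = 0} = 2"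
    using quad_zeros[OF nz] by blast
  then show ?thesis by (intro notI) simp
qed




definition LF :: "(sphere \<Rightarrow> sphere) \<Rightarrow> sphere \<Rightarrow> complex \<Rightarrow> complex" where
  "LF g w = (\<lambda>z. chart (g w) (g (unchart w z)))"

definition inch :: "sphere \<Rightarrow> sphere \<Rightarrow> bool" where
  "inch u x \<longleftrightarrow> unchart u (chart u x) = x"

definition good :: "(sphere \<Rightarrow> sphere) \<Rightarrow> bool" where
  "good g \<longleftrightarrow> (\<forall>w. (\<exists>D. (LF g w has_field_derivative D) (at (chart w w))) \<and>
        (\<forall>\<^sub>F z in nhds (chart w w). inch (g w) (g (unchart w z))))"

lemma unchart_chart_self: "unchart w (chart w w) = w"
  by (cases w) auto

lemma chart_unchart: "chart w (unchart w z) = z"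
  by (cases w) auto

lemma crit_LF: "critical_point g w \<longleftrightarrow> (LF g w has_field_derivative 0) (at (chart w w))"
  unfolding critical_point_def LF_def ..

lemma LF_at: "LF g w (chart w w) = chart (g w) (g w)"
  unfolding LF_def by (simp add: unchart_chart_self)

lemma good_id: "good id"
  unfolding good_def LF_def inch_def
  by (auto simp: chart_unchart unchart_chart_self intro!: exI[of _ 1] DERIV_ident)

lemma good_comp_main:
  assumes g: "good g" and h: "good h"
    and dg: "(LF g (h w) has_field_derivative Dg) (at (chart (h w) (h w)))"
    and dh: "(LF h w has_field_derivative Dh) (at (chart w w))"
  shows "(LF (g \<circ> h) w has_field_derivative (Dg * Dh)) (at (chart w w)) \<and>
     (\<forall>\<^sub>F z in nhds (chart w w). inch (g (h w)) (g (h (unchart w z))))"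
proof -
    define u where "u = h w"
    have evh: "\<forall>\<^sub>F z in nhds (chart w w). inch (h w) (h (unchart w z))"
      using h unfolding good_def by blast
    have evg: "\<forall>\<^sub>F y in nhds (chart u u). inch (g u) (g (unchart u y))"
      using g unfolding good_def by blast
    have hz0: "LF h w (chart w w) = chart u u" by (simp add: LF_at u_def)
    have eq: "\<forall>\<^sub>F z in nhds (chart w w). LF (g \<circ> h) w z = (LF g u \<circ> LF h w) z"
      using evh
    proof (rule eventually_mono)
      fix z assume "inch (h w) (h (unchart w z))"
      then have "h (unchart w z) = unchart u (LF h w z)"
        unfolding inch_def LF_def u_def by simp
      then show "LF (g \<circ> h) w z = (LF g u \<circ> LF h w) z"
        unfolding LF_def u_def by simp
    qed
    have dg': "DERIV (LF g u) (LF h w (chart w w)) :> Dg" using dg hz0 u_def by simp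
    have chain: "((LF g u \<circ> LF h w) has_field_derivative Dg * Dh) (at (chart w w))"
      using DERIV_chain[OF dg' dh] .
    have d1: "(LF (g \<circ> h) w has_field_derivative Dg * Dh) (at (chart w w))"
      using DERIV_cong_ev[OF refl eq refl] chain by (simp add: o_def)
    have cont: "isCont (LF h w) (chart w w)" using DERIV_isCont[OF dh] .
    have lim: "filterlim (LF h w) (nhds (chart u u)) (at (chart w w))"
      using cont hz0 unfolding isCont_def by simp
    have ev2: "\<forall>\<^sub>F z in at (chart w w). inch (g u) (g (unchart u (LF h w z)))"
      using lim evg unfolding filterlim_iff by blast
    have ev3: "\<forall>\<^sub>F z in nhds (chart w w). inch (g u) (g (unchart u (LF h w z)))"
      unfolding eventually_nhds_conv_at using ev2 evg[THEN eventually_nhds_x_imp_x] hz0 by simp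
    have "\<forall>\<^sub>F z in nhds (chart w w). inch (g (h w)) (g (h (unchart w z)))"
      using eventually_conj[OF ev3 evh]
    proof (rule eventually_mono)
      fix z assume a: "inch (g u) (g (unchart u (LF h w z))) \<and> inch (h w) (h (unchart w z))"
      then have "h (unchart w z) = unchart u (LF h w z)"
        unfolding inch_def LF_def u_def by simp
      with a show "inch (g (h w)) (g (h (unchart w z)))" unfolding u_def by simp
    qed
    with d1 show ?thesis by simp
qed

lemma good_comp:
  assumes g: "good g" and h: "good h"
  shows "good (g \<circ> h)"
    unfolding good_def
  proof
    fix w
    obtain Dh where dh: "(LF h w has_field_derivative Dh) (at (chart w w))"
      using h unfolding good_def by blast
    obtain Dg where dg: "(LF g (h w) has_field_derivative Dg) (at (chart (h w) (h w)))"
      using g unfolding good_def by blast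
    show "(\<exists>D. (LF (g \<circ> h) w has_field_derivative D) (at (chart w w))) \<and>
        (\<forall>\<^sub>F z in nhds (chart w w). inch ((g \<circ> h) w) ((g \<circ> h) (unchart w z)))"
      using good_comp_main[OF g h dg dh] by auto
  qed

lemma good_crit:
  assumes "good g"
  shows "critical_point g w \<longleftrightarrow> (\<forall>D. (LF g w has_field_derivative D) (at (chart w w)) \<longrightarrow> D = 0)"
  using assms unfolding good_def crit_LF by (metis DERIV_unique)

lemma crit_comp:
  assumes g: "good g" and h: "good h"
  shows "critical_point (g \<circ> h) w \<longleftrightarrow> critical_point h w \<or> critical_point g (h w)"
proof -
  obtain Dh where dh: "(LF h w has_field_derivative Dh) (at (chart w w))"
    using h unfolding good_def by blast
  obtain Dg where dg: "(LF g (h w) has_field_derivative Dg) (at (chart (h w) (h w)))"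
    using g unfolding good_def by blast
  have d: "(LF (g \<circ> h) w has_field_derivative Dg * Dh) (at (chart w w))"
    using good_comp_main[OF g h dg dh] by blast
  have gc: "good (g \<circ> h)" using good_comp[OF g h] by blast
  show ?thesis
    using good_crit[OF gc, of w] good_crit[OF g, of "h w"] good_crit[OF h, of w] d dg dh
    by (metis DERIV_unique mult_eq_0_iff)
qed

lemma good_iter: "good f \<Longrightarrow> good (f ^^ n)"
  by (induction n) (auto simp: good_id funpow_Suc_right good_comp)

lemma crit_iter:
  assumes "good f"
  shows "critical_point (f ^^ n) w \<longleftrightarrow> (\<exists>i<n. critical_point f ((f ^^ i) w))"
proof (induction n arbitrary: w)
  case 0
  have "(LF id w has_field_derivative 1) (at (chart w w))"
    unfolding LF_def by (simp add: chart_unchart)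
  then have nc: "\<not> critical_point id w" using good_crit[OF good_id, of w] by force
  then show ?case by (metis funpow.simps(1) less_nat_zero_code)
next
  case (Suc n)
  have "critical_point (f ^^ Suc n) w \<longleftrightarrow> critical_point f w \<or> critical_point (f ^^ n) (f w)"
    unfolding funpow_Suc_right using crit_comp[OF good_iter[OF assms] assms] by simp
  also have "\<dots> \<longleftrightarrow> (\<exists>i<Suc n. critical_point f ((f ^^ i) w))"
  proof
    assume "critical_point f w \<or> critical_point (f ^^ n) (f w)"
    then show "\<exists>i<Suc n. critical_point f ((f ^^ i) w)"
    proof
      assume "critical_point f w" then show ?thesis by (intro exI[of _ 0]) auto
    next
      assume "critical_point (f ^^ n) (f w)"
      then obtain i where "i < n" "critical_point f ((f ^^ i) (f w))" using Suc.IH by blast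
      then show ?thesis by (intro exI[of _ "Suc i"]) (simp add: funpow_Suc_right del: funpow.simps)
    qed
  next
    assume "\<exists>i<Suc n. critical_point f ((f ^^ i) w)"
    then obtain i where i: "i < Suc n" "critical_point f ((f ^^ i) w)" by blast
    show "critical_point f w \<or> critical_point (f ^^ n) (f w)"
    proof (cases i)
      case 0 then show ?thesis using i by simp
    next
      case (Suc j)
      then have "critical_point f ((f ^^ j) (f w))" "j < n" using i by (simp_all add: funpow_Suc_right del: funpow.simps)
      then show ?thesis using Suc.IH by blast
    qed
  qed
  finally show ?case .
qed




locale qr =
  fixes p0 p1 p2 q0 q1 q2 :: complex
  assumes nocommon: "\<And>a. p2*a^2+p1*a+p0 = 0 \<Longrightarrow> q2*a^2+q1*a+q0 = 0 \<Longrightarrow> False"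
    and lead: "p2 \<noteq> 0 \<or> q2 \<noteq> 0"
    and qnz: "\<not> (q2 = 0 \<and> q1 = 0 \<and> q0 = 0)"
begin

definition P where "P z = p2*z^2+p1*z+p0"
definition Q where "Q z = q2*z^2+q1*z+q0"
definition Pr where "Pr z = p2 + p1*z + p0*z^2"
definition Qr where "Qr z = q2 + q1*z + q0*z^2"

definition f :: "sphere \<Rightarrow> sphere" where
  "f w = (case w of Some a \<Rightarrow> (if Q a \<noteq> 0 then Some (P a / Q a) else None)
              | None \<Rightarrow> (if q2 = 0 then None else Some (p2/q2)))"

definition gco :: "sphere \<Rightarrow> complex \<times> complex \<times> complex" where
  "gco y = (case y of Some b \<Rightarrow> (p2 - b*q2, p1 - b*q1, p0 - b*q0) | None \<Rightarrow> (q2, q1, q0))"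

definition discr :: "sphere \<Rightarrow> complex" where
  "discr y = (case gco y of (g2, g1, g0) \<Rightarrow> g1^2 - 4*g0*g2)"

definition Zs :: "sphere \<Rightarrow> sphere set" where
  "Zs y = (case gco y of (g2, g1, g0) \<Rightarrow> {w. case w of None \<Rightarrow> g2 = 0 | Some a \<Rightarrow> g2*a^2+g1*a+g0 = 0})"

lemma PQ_nocommon: "P a = 0 \<Longrightarrow> Q a = 0 \<Longrightarrow> False"
  unfolding P_def Q_def using nocommon by blast

lemma Pr_inv: "z \<noteq> 0 \<Longrightarrow> P (1/z) = Pr z / z^2"
  unfolding P_def Pr_def by (simp add: field_simps power2_eq_square)
lemma Qr_inv: "z \<noteq> 0 \<Longrightarrow> Q (1/z) = Qr z / z^2"
  unfolding Q_def Qr_def by (simp add: field_simps power2_eq_square)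

lemma fib: "f w = y \<longleftrightarrow> w \<in> Zs y"
proof (cases w)
  case None
  then show ?thesis
    using lead by (cases y) (auto simp: f_def Zs_def gco_def field_simps)
next
  case (Some a)
  show ?thesis
  proof (cases y)
    case None
    then show ?thesis using Some by (auto simp: f_def Zs_def gco_def Q_def)
  next
    case (Some b)
    have e: "(p2 - b*q2)*a^2 + (p1-b*q1)*a + (p0 - b*q0) = P a - b * Q a"
      by (simp add: P_def Q_def algebra_simps)
    show ?thesis
    proof (cases "Q a = 0")
      case True
      then have "P a \<noteq> 0" using PQ_nocommon by blast
      then show ?thesis using True Some \<open>w = Some a\<close> e by (simp add: f_def Zs_def gco_def)
    next
      case False
      have "P a / Q a = b \<longleftrightarrow> P a - b*Q a = 0" using False by (auto simp: field_simps)
      then show ?thesis using False Some \<open>w = Some a\<close> e by (simp add: f_def Zs_def gco_def)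
    qed
  qed
qed

lemma gco_nz: "gco y \<noteq> (0, 0, 0)"
proof (cases y)
  case None
  then show ?thesis using qnz by (auto simp: gco_def)
next
  case (Some b)
  show ?thesis
  proof
    assume g: "gco y = (0, 0, 0)"
    then have e: "p2 = b*q2" "p1 = b*q1" "p0 = b*q0" using Some by (auto simp: gco_def)
    have q2: "q2 \<noteq> 0" using lead e by auto
    have "{w. case w of None \<Rightarrow> q2 = 0 | Some a \<Rightarrow> q2*a^2+q1*a+q0 = 0} \<noteq> {}"
      by (rule quad_ne) (use q2 in simp)
    then obtain x where "x \<in> {w. case w of None \<Rightarrow> q2 = 0 | Some a \<Rightarrow> q2*a^2+q1*a+q0 = 0}"
      by blast
    then obtain a where "Q a = 0" using q2 unfolding Q_def by (auto split: option.splits)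
    moreover have "P a = b * Q a" using e unfolding P_def Q_def by (simp add: algebra_simps)
    ultimately show False using PQ_nocommon by simp
  qed
qed


lemma disc_id: "g2*a^2+g1*a+(g0::complex) = 0 \<Longrightarrow> g1^2 - 4*g0*g2 = (2*g2*a+g1)^2"
proof -
  assume h: "g2*a^2+g1*a+(g0::complex) = 0"
  have "(2*g2*a+g1)^2 = g1^2 - 4*g0*g2 + 4*g2*(g2*a^2+g1*a+g0)" by (simp add: algebra_simps power2_eq_square)
  with h show ?thesis by simp
qed

lemma ev_ne: "isCont g (x::complex) \<Longrightarrow> g x \<noteq> (0::complex) \<Longrightarrow> \<forall>\<^sub>F z in nhds x. g z \<noteq> 0"
  unfolding eventually_nhds_conv_at isCont_def using tendsto_imp_eventually_ne by blast

lemma DP: "(P has_field_derivative (2*p2*a+p1)) (at a)"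
  unfolding P_def by (auto intro!: derivative_eq_intros)
lemma DQ: "(Q has_field_derivative (2*q2*a+q1)) (at a)"
  unfolding Q_def by (auto intro!: derivative_eq_intros)
lemma DPr: "(Pr has_field_derivative (p1 + 2*p0*a)) (at a)"
  unfolding Pr_def by (auto intro!: derivative_eq_intros)
lemma DQr: "(Qr has_field_derivative (q1 + 2*q0*a)) (at a)"
  unfolding Qr_def by (auto intro!: derivative_eq_intros)
lemma cP: "isCont P a" unfolding P_def by simp
lemma cQ: "isCont Q a" unfolding Q_def by simp
lemma cPr: "isCont Pr a" unfolding Pr_def by simp
lemma cQr: "isCont Qr a" unfolding Qr_def by simp

lemma inch_Some: "inch (Some b) x \<longleftrightarrow> x \<noteq> None"
  by (cases x) (auto simp: inch_def)
lemma inch_None: "inch None x \<longleftrightarrow> x \<noteq> Some 0"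
  by (cases x) (auto simp: inch_def)


lemma local1:
  assumes Qa: "Q a \<noteq> 0"
  shows "\<exists>D. (LF f (Some a) has_field_derivative D) (at (chart (Some a) (Some a))) \<and>
    (\<forall>\<^sub>F z in nhds (chart (Some a) (Some a)). inch (f (Some a)) (f (unchart (Some a) z))) \<and>
    (D = 0 \<longleftrightarrow> discr (f (Some a)) = 0)"
proof -
  define b where "b = P a / Q a"
  have fw: "f (Some a) = Some b" using Qa by (simp add: f_def b_def)
  have LFe: "LF f (Some a) = (\<lambda>z. P z / Q z)"
    unfolding LF_def fw by (rule ext) (simp add: f_def)
  define D where "D = ((2*p2*a+p1) * Q a - P a * (2*q2*a+q1)) / (Q a * Q a)"
  have d: "(LF f (Some a) has_field_derivative D) (at (chart (Some a) (Some a)))"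
    unfolding LFe D_def using DERIV_divide[OF DP DQ Qa] by simp
  have Pa: "P a = b * Q a" using Qa by (simp add: b_def)
  define g where "g = 2*(p2 - b*q2)*a + (p1 - b*q1)"
  have num: "(2*p2*a+p1) * Q a - P a * (2*q2*a+q1) = Q a * g"
    unfolding Pa g_def by (simp add: algebra_simps)
  have ga: "(p2 - b*q2)*a^2 + (p1 - b*q1)*a + (p0 - b*q0) = 0"
    using Pa unfolding P_def Q_def by (simp add: algebra_simps)
  have dis: "discr (f (Some a)) = g^2"
    unfolding fw discr_def gco_def g_def using disc_id[OF ga] by simp
  have "D = 0 \<longleftrightarrow> discr (f (Some a)) = 0"
    unfolding D_def num dis using Qa by simp
  moreover have "\<forall>\<^sub>F z in nhds (chart (Some a) (Some a)). inch (f (Some a)) (f (unchart (Some a) z))"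
  proof -
    have "\<forall>\<^sub>F z in nhds a. inch (f (Some a)) (f (Some z))"
      using ev_ne[OF cQ Qa] by (rule eventually_mono) (unfold fw, simp add: inch_Some f_def)
    then show ?thesis by simp
  qed
  ultimately show ?thesis using d by blast
qed

lemma local2:
  assumes Qa: "Q a = 0"
  shows "\<exists>D. (LF f (Some a) has_field_derivative D) (at (chart (Some a) (Some a))) \<and>
    (\<forall>\<^sub>F z in nhds (chart (Some a) (Some a)). inch (f (Some a)) (f (unchart (Some a) z))) \<and>
    (D = 0 \<longleftrightarrow> discr (f (Some a)) = 0)"
proof -
  have Pa: "P a \<noteq> 0" using PQ_nocommon Qa by blast
  have fw: "f (Some a) = None" using Qa by (simp add: f_def)
  have LFe: "LF f (Some a) = (\<lambda>z. Q z / P z)"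
    unfolding LF_def fw by (rule ext) (simp add: f_def)
  define D where "D = ((2*q2*a+q1) * P a - Q a * (2*p2*a+p1)) / (P a * P a)"
  have d: "(LF f (Some a) has_field_derivative D) (at (chart (Some a) (Some a)))"
    unfolding LFe D_def using DERIV_divide[OF DQ DP Pa] by simp
  have ga: "q2*a^2 + q1*a + q0 = 0" using Qa unfolding Q_def by simp
  have dis: "discr (f (Some a)) = (2*q2*a+q1)^2"
    unfolding fw discr_def gco_def using disc_id[OF ga] by simp
  have "D = 0 \<longleftrightarrow> discr (f (Some a)) = 0"
    unfolding D_def dis using Qa Pa by simp
  moreover have "\<forall>\<^sub>F z in nhds (chart (Some a) (Some a)). inch (f (Some a)) (f (unchart (Some a) z))"
  proof -
    have "\<forall>\<^sub>F z in nhds a. inch (f (Some a)) (f (Some z))"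
      using ev_ne[OF cP Pa] by (rule eventually_mono) (unfold fw, simp add: inch_None f_def)
    then show ?thesis by simp
  qed
  ultimately show ?thesis using d by blast
qed

lemma local3:
  assumes q2: "q2 \<noteq> 0"
  shows "\<exists>D. (LF f None has_field_derivative D) (at (chart None None)) \<and>
    (\<forall>\<^sub>F z in nhds (chart None None). inch (f None) (f (unchart None z))) \<and>
    (D = 0 \<longleftrightarrow> discr (f None) = 0)"
proof -
  define b where "b = p2 / q2"
  have fw: "f None = Some b" using q2 by (simp add: f_def b_def)
  have LFe: "LF f None = (\<lambda>z. Pr z / Qr z)"
  proof
    fix z show "LF f None z = Pr z / Qr z"
    proof (cases "z = 0")
      case True then show ?thesis by (simp add: LF_def fw b_def Pr_def Qr_def)
    next
      case False
      then show ?thesis using Pr_inv[OF False] Qr_inv[OF False]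
        unfolding LF_def fw by (simp add: f_def)
    qed
  qed
  have Qr0: "Qr 0 \<noteq> 0" using q2 by (simp add: Qr_def)
  define D where "D = ((p1 + 2*p0*0) * Qr 0 - Pr 0 * (q1 + 2*q0*0)) / (Qr 0 * Qr 0)"
  have d: "(LF f None has_field_derivative D) (at (chart None None))"
    unfolding LFe D_def using DERIV_divide[OF DPr DQr Qr0] by simp
  have pb: "p2 = b * q2" using q2 by (simp add: b_def)
  have num: "(p1 + 2*p0*0) * Qr 0 - Pr 0 * (q1 + 2*q0*0) = q2 * (p1 - b*q1)"
    unfolding Pr_def Qr_def using pb by (simp add: algebra_simps)
  have dis: "discr (f None) = (p1 - b*q1)^2"
    unfolding fw discr_def gco_def using pb by simp
  have "D = 0 \<longleftrightarrow> discr (f None) = 0"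
    unfolding D_def num dis using q2 Qr0 by simp
  moreover have "\<forall>\<^sub>F z in nhds 0. inch (f None) (f (unchart None z))"
    using ev_ne[OF cQr Qr0]
  proof (rule eventually_mono)
    fix z assume "Qr z \<noteq> 0"
    then show "inch (f None) (f (unchart None z))"
      using Qr_inv[of z] q2 by (cases "z = 0") (unfold fw, auto simp: inch_Some f_def)
  qed
  ultimately show ?thesis using d by auto
qed

lemma local4:
  assumes q2: "q2 = 0"
  shows "\<exists>D. (LF f None has_field_derivative D) (at (chart None None)) \<and>
    (\<forall>\<^sub>F z in nhds (chart None None). inch (f None) (f (unchart None z))) \<and>
    (D = 0 \<longleftrightarrow> discr (f None) = 0)"
proof -
  have p2: "p2 \<noteq> 0" using lead q2 by simp
  have fw: "f None = None" unfolding f_def using q2 by simp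
  have LFe: "LF f None = (\<lambda>z. Qr z / Pr z)"
  proof
    fix z show "LF f None z = Qr z / Pr z"
    proof (cases "z = 0")
      case True
      have "Qr 0 = 0" unfolding Qr_def using q2 by simp
      then show ?thesis unfolding LF_def using True by (simp add: fw)
    next
      case False
      then show ?thesis using Pr_inv[OF False] Qr_inv[OF False]
        unfolding LF_def fw by (simp add: f_def)
    qed
  qed
  have Pr0: "Pr 0 \<noteq> 0" using p2 by (simp add: Pr_def)
  define D where "D = ((q1 + 2*q0*0) * Pr 0 - Qr 0 * (p1 + 2*p0*0)) / (Pr 0 * Pr 0)"
  have d: "(LF f None has_field_derivative D) (at (chart None None))"
    unfolding LFe D_def using DERIV_divide[OF DQr DPr Pr0] by simp
  have dis: "discr (f None) = q1^2"
    unfolding fw discr_def gco_def by (simp add: q2)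
  have "D = 0 \<longleftrightarrow> discr (f None) = 0"
    unfolding D_def dis Pr_def Qr_def using q2 p2 by simp
  moreover have "\<forall>\<^sub>F z in nhds 0. inch (f None) (f (unchart None z))"
    using ev_ne[OF cPr Pr0]
  proof (rule eventually_mono)
    fix z assume "Pr z \<noteq> 0"
    then show "inch (f None) (f (unchart None z))"
    proof (cases "z = 0")
      case True then show ?thesis by (simp add: fw inch_None)
    next
      case False then show ?thesis
        using Pr_inv[of z] \<open>Pr z \<noteq> 0\<close> by (unfold fw, auto simp: inch_None f_def)
    qed
  qed
  ultimately show ?thesis using d by auto
qed

lemma local_an:
  "\<exists>D. (LF f w has_field_derivative D) (at (chart w w)) \<and>
    (\<forall>\<^sub>F z in nhds (chart w w). inch (f w) (f (unchart w z))) \<and>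
    (D = 0 \<longleftrightarrow> discr (f w) = 0)"
  using local1 local2 local3 local4 by (cases w) blast+

lemma good_f: "good f"
  unfolding good_def using local_an by blast

lemma crit_f: "critical_point f w \<longleftrightarrow> discr (f w) = 0"
  using local_an[of w] good_crit[OF good_f, of w] by (metis DERIV_unique)


lemma Zs_quad: "(discr y = 0 \<longrightarrow> (\<exists>x. Zs y = {x})) \<and> (discr y \<noteq> 0 \<longrightarrow> finite (Zs y) \<and> card (Zs y) = 2)"
proof -
  obtain g2 g1 g0 where g: "gco y = (g2, g1, g0)" by (metis prod_cases3)
  have nz: "\<not>(g2 = 0 \<and> g1 = 0 \<and> g0 = 0)" using gco_nz[of y] g by auto
  show ?thesis using quad_zeros[OF nz] g unfolding Zs_def discr_def by simp
qed

lemma fibre_crit: "critical_point f c \<Longrightarrow> {w. f w = f c} = {c}"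
proof -
  assume "critical_point f c"
  then have "discr (f c) = 0" using crit_f by blast
  then obtain x where x: "Zs (f c) = {x}" using Zs_quad by blast
  have "{w. f w = f c} = Zs (f c)" using fib by blast
  moreover have "c \<in> Zs (f c)" using fib by blast
  ultimately show ?thesis using x by auto
qed

lemma fibre_noncrit: "\<not> critical_value f y \<Longrightarrow> finite {w. f w = y} \<and> card {w. f w = y} = 2"
proof -
  assume nc: "\<not> critical_value f y"
  have e: "{w. f w = y} = Zs y" using fib by blast
  have "Zs y \<noteq> {}"
  proof -
    obtain g2 g1 g0 where g: "gco y = (g2, g1, g0)" by (metis prod_cases3)
    have nz: "\<not>(g2 = 0 \<and> g1 = 0 \<and> g0 = 0)" using gco_nz[of y] g by auto
    show ?thesis using quad_ne[OF nz] g unfolding Zs_def by simp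
  qed
  then obtain w where "f w = y" using fib by blast
  then have "\<not> critical_point f w" using nc unfolding critical_value_def by blast
  then have "discr y \<noteq> 0" using crit_f \<open>f w = y\<close> by blast
  then show ?thesis using Zs_quad e by simp
qed

end



lemma poly2: assumes "degree (p::complex poly) \<le> 2"
  shows "poly p z = coeff p 2 * z^2 + coeff p 1 * z + coeff p 0"
proof -
  have "poly p z = (\<Sum>i\<le>degree p. coeff p i * z ^ i)" by (rule poly_altdef)
  also have "\<dots> = (\<Sum>i\<le>2. coeff p i * z ^ i)"
    using assms by (intro sum.mono_neutral_left) (auto simp: coeff_eq_0)
  also have "\<dots> = coeff p 2 * z^2 + coeff p 1 * z + coeff p 0"
    by (simp add: numeral_2_eq_2 algebra_simps)
  finally show ?thesis .
qed

lemma qrm_to_qr: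
  assumes "quadratic_rational_map f"
  shows "\<exists>p0 p1 p2 q0 q1 q2. qr p0 p1 p2 q0 q1 q2 \<and> f = qr.f p0 p1 p2 q0 q1 q2"
proof -
  obtain p q where q0: "q \<noteq> 0" and cop: "coprime p q" and md: "max (degree p) (degree q) = 2"
    and fe: "f = rat_eval p q"
    using assms unfolding quadratic_rational_map_def by blast
  have dp: "degree p \<le> 2" and dq: "degree q \<le> 2" using md by auto
  note pp = poly2[OF dp] and pq = poly2[OF dq]
  have nocommon: "False" if "coeff p 2*a^2+coeff p 1*a+coeff p 0 = 0" "coeff q 2*a^2+coeff q 1*a+coeff q 0 = 0" for a
  proof -
    have "[:-a, 1:] dvd p" "[:-a, 1:] dvd q" using that pp pq by (simp_all add: poly_eq_0_iff_dvd[symmetric])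
    then have "is_unit [:-a, 1:]" using cop coprime_common_divisor by blast
    then show False using is_unit_iff_degree[of "[:-a, 1:]"] by simp
  qed
  have lead: "coeff p 2 \<noteq> 0 \<or> coeff q 2 \<noteq> 0"
  proof -
    have "degree p = 2 \<or> degree q = 2" using md by linarith
    then show ?thesis
      by (metis leading_coeff_0_iff zero_neq_numeral degree_0)
  qed
  have qnz: "\<not> (coeff q 2 = 0 \<and> coeff q 1 = 0 \<and> coeff q 0 = 0)"
  proof
    assume h: "coeff q 2 = 0 \<and> coeff q 1 = 0 \<and> coeff q 0 = 0"
    have "coeff q n = 0" for n
    proof -
      have "n = 0 \<or> n = 1 \<or> n = 2 \<or> n > 2" by linarith
      then show ?thesis using h dq coeff_eq_0[of q n] by auto
    qed
    then have "q = 0" by (simp add: poly_eq_iff)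
    with q0 show False by simp
  qed
  interpret qr "coeff p 0" "coeff p 1" "coeff p 2" "coeff q 0" "coeff q 1" "coeff q 2"
    by unfold_locales (use nocommon lead qnz in blast)+
  have "f = qr.f (coeff p 0) (coeff p 1) (coeff p 2) (coeff q 0) (coeff q 1) (coeff q 2)"
  proof
    fix w show "f w = qr.f (coeff p 0) (coeff p 1) (coeff p 2) (coeff q 0) (coeff q 1) (coeff q 2) w"
    proof (cases w)
      case (Some a)
      then show ?thesis unfolding fe f_def rat_eval_def P_def Q_def using pp pq by simp
    next
      case None
      have c1: "coeff q 2 = 0 \<longleftrightarrow> degree p > degree q"
      proof
        assume "coeff q 2 = 0"
        then have "degree q \<noteq> 2" using q0 by (metis leading_coeff_0_iff)
        then show "degree p > degree q" using md by linarith
      next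
        assume "degree p > degree q"
        then have "degree q < 2" using dp by linarith
        then show "coeff q 2 = 0" by (simp add: coeff_eq_0)
      qed
      have c2: "coeff q 2 \<noteq> 0 \<Longrightarrow> degree p = degree q \<Longrightarrow> lead_coeff p / lead_coeff q = coeff p 2 / coeff q 2"
        using dq le_degree[of q 2] by (metis antisym)
      have c3: "coeff q 2 \<noteq> 0 \<Longrightarrow> degree p < degree q \<Longrightarrow> coeff p 2 = 0"
        using dq by (simp add: coeff_eq_0)
      show ?thesis unfolding fe f_def rat_eval_def None using c1 c2 c3
        by (cases "degree p > degree q"; cases "degree p = degree q") auto
    qed
  qed
  then show ?thesis using qr_axioms by blast
qed




lemma sum_pow2: "(\<Sum>i<n. (2::nat)^i) = 2^n - 1"
  by (induction n) auto

locale comb =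
  fixes f :: "sphere \<Rightarrow> sphere" and v1 v2 \<alpha> c1 c2 :: sphere and m k :: nat
  assumes G: "good f"
    and FC: "\<And>c. critical_point f c \<Longrightarrow> {w. f w = f c} = {c}"
    and FN: "\<And>y. \<not> critical_value f y \<Longrightarrow> finite {w. f w = y} \<and> card {w. f w = y} = 2"
    and CV: "{v. critical_value f v} = {v1, v2}" and v12: "v1 \<noteq> v2" and fv: "f v1 = f v2"
    and fa: "f \<alpha> = \<alpha>" and ex: "\<exists>n. (f ^^ n) v1 = \<alpha>"
    and mdef: "m = (LEAST n. (f ^^ n) v1 = \<alpha>)" and m2: "m > 2" and km: "k > m"
    and cc1: "critical_point f c1" "f c1 = v1"
    and cc2: "critical_point f c2" "f c2 = v2"
begin

lemma L_ge: "(f ^^ n) v1 = \<alpha> \<Longrightarrow> m \<le> n"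
  unfolding mdef by (rule Least_le)

lemma L_m: "(f ^^ m) v1 = \<alpha>"
  unfolding mdef using ex by (rule LeastI_ex)

lemma fix_a: "(f ^^ j) \<alpha> = \<alpha>"
  by (induction j) (auto simp: fa)

lemma L_after: "n \<ge> m \<Longrightarrow> (f ^^ n) v1 = \<alpha>"
proof -
  assume "n \<ge> m"
  then have "n = (n - m) + m" by simp
  then have "(f ^^ n) v1 = (f ^^ (n - m)) ((f ^^ m) v1)" by (metis funpow_add o_apply)
  then show ?thesis using L_m fix_a by simp
qed

lemma orbit_iff: "(f ^^ n) v1 = \<alpha> \<longleftrightarrow> n \<ge> m"
  using L_ge L_after by blast

lemma L_per:
  assumes ab: "a < b" and e: "(f ^^ a) v1 = (f ^^ b) v1"
  shows "m \<le> a"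
proof -
  have rep: "(f ^^ (N*(b-a) + a)) v1 = (f ^^ a) v1" for N
  proof (induction N)
    case 0 then show ?case by simp
  next
    case (Suc N)
    have "Suc N * (b - a) + a = N*(b-a) + b" using ab by simp
    then have "(f ^^ (Suc N * (b - a) + a)) v1 = (f ^^ (N*(b-a))) ((f ^^ b) v1)"
      by (metis funpow_add o_apply)
    also have "\<dots> = (f ^^ (N*(b-a))) ((f ^^ a) v1)" using e by simp
    also have "\<dots> = (f ^^ (N*(b-a) + a)) v1" by (metis funpow_add o_apply)
    finally show ?case using Suc.IH by simp
  qed
  have "1 \<le> b - a" using ab by simp
  then have "m * 1 \<le> m*(b-a)" by (rule mult_le_mono2)
  then have "m \<le> m*(b-a) + a" by linarith
  then have "(f ^^ a) v1 = \<alpha>" using rep[of m] L_after by metis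
  then show ?thesis using L_ge by blast
qed

lemma L_v2: "n \<ge> 1 \<Longrightarrow> (f ^^ n) v2 = (f ^^ n) v1"
proof -
  assume "n \<ge> 1"
  then obtain j where "n = Suc j" by (cases n) auto
  then show ?thesis by (simp add: funpow_Suc_right fv del: funpow.simps)
qed

lemma NR: "v \<in> {v1, v2} \<Longrightarrow> t \<ge> 1 \<Longrightarrow> (f ^^ t) v \<notin> {v1, v2}"
proof
  assume v: "v \<in> {v1, v2}" and t: "t \<ge> 1" and h: "(f ^^ t) v \<in> {v1, v2}"
  have e: "(f ^^ t) v = (f ^^ t) v1" using v L_v2[OF t] by auto
  show False
  proof (cases "(f ^^ t) v1 = v1")
    case True
    have "m \<le> 0" by (rule L_per[of 0 t]) (use t True in auto)
    then show False using m2 by simp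
  next
    case False
    then have "(f ^^ t) v1 = v2" using h e by auto
    then have "(f ^^ Suc t) v1 = (f ^^ 1) v1" using fv by simp
    then have "m \<le> 1" using L_per[of 1 "Suc t"] t by simp
    then show False using m2 by simp
  qed
qed

lemma crit_set: "critical_point f c \<longleftrightarrow> c \<in> {c1, c2}"
proof
  assume c: "critical_point f c"
  then have "critical_value f (f c)" unfolding critical_value_def by blast
  then have "f c = v1 \<or> f c = v2" using CV by blast
  then show "c \<in> {c1, c2}"
  proof
    assume "f c = v1"
    then have "c \<in> {w. f w = f c1}" using cc1 by simp
    then show ?thesis using FC[OF cc1(1)] by auto
  next
    assume "f c = v2"
    then have "c \<in> {w. f w = f c2}" using cc2 by simp
    then show ?thesis using FC[OF cc2(1)] by auto
  qed
qed (use cc1 cc2 in auto)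

lemma c12: "c1 \<noteq> c2" using cc1 cc2 v12 by auto

lemma fcV: "c \<in> {c1, c2} \<Longrightarrow> f c \<in> {v1, v2}" using cc1 cc2 by auto

lemma NO: "c \<in> {c1, c2} \<Longrightarrow> v \<in> {v1, v2} \<Longrightarrow> (f ^^ s) v \<noteq> c"
proof
  assume c: "c \<in> {c1, c2}" and v: "v \<in> {v1, v2}" and h: "(f ^^ s) v = c"
  have "(f ^^ Suc s) v = f c" using h by simp
  then have "(f ^^ Suc s) v \<in> {v1, v2}" using fcV[OF c] by simp
  then show False using NR[OF v, of "Suc s"] by simp
qed

lemma pre_count:
  "(\<forall>s<n. \<forall>v\<in>{v1, v2}. (f ^^ s) v \<noteq> y) \<Longrightarrow> finite {w. (f ^^ n) w = y} \<and> card {w. (f ^^ n) w = y} = 2 ^ n"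
proof (induction n arbitrary: y)
  case 0
  then show ?case by simp
next
  case (Suc n)
  have ny: "y \<notin> {v1, v2}" using Suc.prems by (metis funpow_0 zero_less_Suc)
  then have "\<not> critical_value f y" using CV by blast
  then have F: "finite {x. f x = y}" "card {x. f x = y} = 2" using FN by auto
  have IH: "finite {w. (f ^^ n) w = x} \<and> card {w. (f ^^ n) w = x} = 2 ^ n" if "f x = y" for x
  proof (rule Suc.IH, intro allI impI ballI)
    fix s v assume "s < n" "v \<in> {v1, v2}"
    show "(f ^^ s) v \<noteq> x"
    proof
      assume "(f ^^ s) v = x"
      then have "(f ^^ Suc s) v = y" using that by simp
      then show False using Suc.prems \<open>s < n\<close> \<open>v \<in> {v1, v2}\<close> by auto
    qed
  qed
  have eq: "{w. (f ^^ Suc n) w = y} = (\<Union>x\<in>{x. f x = y}. {w. (f ^^ n) w = x})" by auto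
  have "card (\<Union>x\<in>{x. f x = y}. {w. (f ^^ n) w = x}) = (\<Sum>x\<in>{x. f x = y}. card {w. (f ^^ n) w = x})"
    by (rule card_UN_disjoint) (use F IH in auto)
  also have "\<dots> = (\<Sum>x\<in>{x. f x = y}. 2 ^ n)" using IH by (intro sum.cong) auto
  also have "\<dots> = 2 ^ Suc n" using F by simp
  finally show ?case unfolding eq using F IH by auto
qed

lemma card_crit_pre: "c \<in> {c1, c2} \<Longrightarrow> finite {w. (f ^^ i) w = c} \<and> card {w. (f ^^ i) w = c} = 2 ^ i"
  using pre_count NO by blast


definition T :: "sphere \<Rightarrow> (nat \<times> sphere) set" where
  "T z = {(i, c). i < k \<and> c \<in> {c1, c2} \<and> (f ^^ (k - i)) c = z}"

lemma split_k: "i \<le> k \<Longrightarrow> (f ^^ k) w = (f ^^ (k - i)) ((f ^^ i) w)"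
proof -
  assume "i \<le> k"
  then have "k = (k - i) + i" by simp
  then show ?thesis by (metis funpow_add o_apply)
qed

lemma S_eq: "{w. (f ^^ k) w = z \<and> critical_point (f ^^ k) w} = (\<Union>x\<in>T z. {w. (f ^^ fst x) w = snd x})"
proof
  show "{w. (f ^^ k) w = z \<and> critical_point (f ^^ k) w} \<subseteq> (\<Union>x\<in>T z. {w. (f ^^ fst x) w = snd x})"
  proof
    fix w assume "w \<in> {w. (f ^^ k) w = z \<and> critical_point (f ^^ k) w}"
    then have z: "(f ^^ k) w = z" and "critical_point (f ^^ k) w" by auto
    then obtain i where i: "i < k" "critical_point f ((f ^^ i) w)" using crit_iter[OF G] by blast
    then have c: "(f ^^ i) w \<in> {c1, c2}" using crit_set by blast
    have "(f ^^ (k - i)) ((f ^^ i) w) = z" using split_k[of i w] i z by simp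
    then have "(i, (f ^^ i) w) \<in> T z" using i c unfolding T_def by simp
    then show "w \<in> (\<Union>x\<in>T z. {w. (f ^^ fst x) w = snd x})" by force
  qed
next
  show "(\<Union>x\<in>T z. {w. (f ^^ fst x) w = snd x}) \<subseteq> {w. (f ^^ k) w = z \<and> critical_point (f ^^ k) w}"
  proof
    fix w assume "w \<in> (\<Union>x\<in>T z. {w. (f ^^ fst x) w = snd x})"
    then obtain i c where ic: "(i, c) \<in> T z" "(f ^^ i) w = c" by auto
    then have i: "i < k" "c \<in> {c1, c2}" "(f ^^ (k - i)) c = z" unfolding T_def by auto
    have "(f ^^ k) w = z" using split_k[of i w] i ic by simp
    moreover have "critical_point (f ^^ k) w"
      using crit_iter[OF G] crit_set i ic by blast
    ultimately show "w \<in> {w. (f ^^ k) w = z \<and> critical_point (f ^^ k) w}" by simp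
  qed
qed

lemma no_two: "c \<in> {c1, c2} \<Longrightarrow> c' \<in> {c1, c2} \<Longrightarrow> i < i' \<Longrightarrow> (f ^^ i) w = c \<Longrightarrow> (f ^^ i') w = c' \<Longrightarrow> False"
proof -
  assume c: "c \<in> {c1, c2}" and c': "c' \<in> {c1, c2}" and ii: "i < i'" and h: "(f ^^ i) w = c" "(f ^^ i') w = c'"
  obtain s where s: "i' - i = Suc s" using ii by (metis Suc_diff_Suc)
  have "i' = (i' - i) + i" using ii by simp
  then have "(f ^^ i') w = (f ^^ (i' - i)) ((f ^^ i) w)" by (metis funpow_add o_apply)
  then have "(f ^^ Suc s) c = c'" using h s by simp
  then have "(f ^^ s) (f c) = c'" by (simp add: funpow_Suc_right del: funpow.simps)
  then show False using NO[OF c' fcV[OF c]] by blast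
qed

lemma finT: "finite (T z)"
proof -
  have "T z \<subseteq> {..<k} \<times> {c1, c2}" unfolding T_def by auto
  then show ?thesis by (rule finite_subset) auto
qed

lemma card_S: "card {w. (f ^^ k) w = z \<and> critical_point (f ^^ k) w} = (\<Sum>x\<in>T z. 2 ^ fst x)"
proof -
  have "card (\<Union>x\<in>T z. {w. (f ^^ fst x) w = snd x}) = (\<Sum>x\<in>T z. card {w. (f ^^ fst x) w = snd x})"
  proof (rule card_UN_disjoint[OF finT])
    show "\<forall>x\<in>T z. finite {w. (f ^^ fst x) w = snd x}"
      using card_crit_pre unfolding T_def by auto
    show "\<forall>x\<in>T z. \<forall>y\<in>T z. x \<noteq> y \<longrightarrow> {w. (f ^^ fst x) w = snd x} \<inter> {w. (f ^^ fst y) w = snd y} = {}"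
    proof (intro ballI impI)
      fix x y assume x: "x \<in> T z" and y: "y \<in> T z" and xy: "x \<noteq> y"
      obtain i c where xe: "x = (i, c)" by fastforce
      obtain i' c' where ye: "y = (i', c')" by fastforce
      have c: "c \<in> {c1, c2}" "c' \<in> {c1, c2}" using x y xe ye unfolding T_def by auto
      show "{w. (f ^^ fst x) w = snd x} \<inter> {w. (f ^^ fst y) w = snd y} = {}"
      proof (rule ccontr)
        assume "{w. (f ^^ fst x) w = snd x} \<inter> {w. (f ^^ fst y) w = snd y} \<noteq> {}"
        then obtain w where w: "(f ^^ i) w = c" "(f ^^ i') w = c'" using xe ye by auto
        have "i < i' \<or> i' < i \<or> i = i'" by linarith
        then show False
          using no_two[OF c(1) c(2) _ w(1) w(2)] no_two[OF c(2) c(1) _ w(2) w(1)] w xy xe ye by auto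
      qed
    qed
  qed
  also have "\<dots> = (\<Sum>x\<in>T z. 2 ^ fst x)"
    using card_crit_pre unfolding T_def by (intro sum.cong) auto
  finally show ?thesis using S_eq by simp
qed


lemma orb_c: "i < k \<Longrightarrow> (f ^^ (k - i)) c = (f ^^ (k - i - 1)) (f c)"
proof -
  assume "i < k"
  then have "k - i = Suc (k - i - 1)" by simp
  then show ?thesis by (metis funpow_Suc_right o_apply)
qed

lemma Vn: "v \<in> {v1, v2} \<Longrightarrow> n \<ge> 1 \<Longrightarrow> (f ^^ n) v = (f ^^ n) v1"
  using L_v2 by auto

lemma sumC: "finite A \<Longrightarrow> (\<Sum>x\<in>A \<times> {c1, c2}. (2::nat) ^ fst x) = 2 * (\<Sum>i\<in>A. 2 ^ i)"
proof -
  assume A: "finite A"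
  have "(\<Sum>x\<in>A \<times> {c1, c2}. (2::nat) ^ fst x) = (\<Sum>i\<in>A. \<Sum>c\<in>{c1, c2}. 2 ^ fst (i, c))"
    by (subst sum.cartesian_product) (simp add: case_prod_beta')
  also have "\<dots> = (\<Sum>i\<in>A. 2 * 2 ^ i)" using c12 by (simp add: mult_2)
  finally show ?thesis by (simp add: sum_distrib_left)
qed

lemma T_V: "c \<in> {c1, c2} \<Longrightarrow> T (f c) = {(k - 1, c)}"
proof -
  assume c: "c \<in> {c1, c2}"
  have cr: "critical_point f c" using c crit_set by blast
  show ?thesis
  proof
    show "T (f c) \<subseteq> {(k - 1, c)}"
    proof
      fix x assume x: "x \<in> T (f c)"
      then obtain i c' where xe: "x = (i, c')" and i: "i < k" "c' \<in> {c1, c2}" "(f ^^ (k - i)) c' = f c"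
        unfolding T_def by auto
      have e: "(f ^^ (k - i - 1)) (f c') = f c" using i orb_c by simp
      have "k - i - 1 = 0"
      proof (rule ccontr)
        assume "k - i - 1 \<noteq> 0"
        then show False using NR[OF fcV[OF i(2)], of "k - i - 1"] e fcV[OF c] by simp
      qed
      then have "i = k - 1" "f c' = f c" using i e by auto
      moreover have "c' = c" using FC[OF cr] \<open>f c' = f c\<close> by blast
      ultimately show "x \<in> {(k - 1, c)}" using xe by simp
    qed
  next
    have "k - (k - 1) = 1" using km by simp
    then show "{(k - 1, c)} \<subseteq> T (f c)" unfolding T_def using c km by simp
  qed
qed

lemma T_beta: "1 \<le> j \<Longrightarrow> j \<le> m - 1 \<Longrightarrow> T ((f ^^ j) v1) = {k - j - 1} \<times> {c1, c2}"
proof -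
  assume j: "1 \<le> j" "j \<le> m - 1"
  show ?thesis
  proof
    show "T ((f ^^ j) v1) \<subseteq> {k - j - 1} \<times> {c1, c2}"
    proof
      fix x assume x: "x \<in> T ((f ^^ j) v1)"
      then obtain i c where xe: "x = (i, c)" and i: "i < k" "c \<in> {c1, c2}" "(f ^^ (k - i)) c = (f ^^ j) v1"
        unfolding T_def by auto
      have e: "(f ^^ (k - i - 1)) (f c) = (f ^^ j) v1" using i orb_c by simp
      have "k - i - 1 \<noteq> 0"
      proof
        assume "k - i - 1 = 0"
        then have "(f ^^ j) v1 \<in> {v1, v2}" using e fcV[OF i(2)] by simp
        then show False using NR[of v1 j] j by simp
      qed
      then have e2: "(f ^^ (k - i - 1)) v1 = (f ^^ j) v1" using e Vn[OF fcV[OF i(2)]] by simp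
      have "k - i - 1 = j"
      proof (rule ccontr)
        assume ne: "k - i - 1 \<noteq> j"
        then have "k - i - 1 < j \<or> j < k - i - 1" by linarith
        then show False
        proof
          assume "k - i - 1 < j"
          then have "m \<le> k - i - 1" using L_per e2 by blast
          then show False using \<open>k - i - 1 < j\<close> j by linarith
        next
          assume "j < k - i - 1"
          then have "m \<le> j" using L_per e2[symmetric] by blast
          then show False using j m2 by linarith
        qed
      qed
      then have "i = k - j - 1" using i by linarith
      then show "x \<in> {k - j - 1} \<times> {c1, c2}" using xe i by simp
    qed
  next
    show "{k - j - 1} \<times> {c1, c2} \<subseteq> T ((f ^^ j) v1)"
    proof
      fix x assume "x \<in> {k - j - 1} \<times> {c1, c2}"
      then obtain c where xe: "x = (k - j - 1, c)" and c: "c \<in> {c1, c2}" by auto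
      have kj: "k - j - 1 < k" "k - (k - j - 1) - 1 = j" using j km by linarith+
      have "(f ^^ (k - (k - j - 1))) c = (f ^^ j) (f c)" using orb_c[OF kj(1)] kj(2) by simp
      also have "\<dots> = (f ^^ j) v1" using Vn[OF fcV[OF c]] j by simp
      finally show "x \<in> T ((f ^^ j) v1)" unfolding T_def using xe c kj by simp
    qed
  qed
qed

lemma T_alpha: "T \<alpha> = {..<k - m} \<times> {c1, c2}"
proof -
  have key: "(f ^^ (k - i)) c = \<alpha> \<longleftrightarrow> i < k - m" if i: "i < k" and c: "c \<in> {c1, c2}" for i c
  proof -
    have e: "(f ^^ (k - i)) c = (f ^^ (k - i - 1)) (f c)" using orb_c[OF i] .
    show ?thesis
    proof (cases "k - i - 1 = 0")
      case True
      have "f c \<noteq> \<alpha>"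
      proof
        assume fa': "f c = \<alpha>"
        have "f c = v1 \<or> f c = v2" using fcV[OF c] by simp
        then show False
        proof
          assume "f c = v1"
          then have "(f ^^ 0) v1 = \<alpha>" using fa' by simp
          then have "m \<le> 0" by (rule L_ge)
          then show False using m2 by simp
        next
          assume "f c = v2"
          then have "(f ^^ 1) v1 = \<alpha>" using fa' fv fa by simp
          then have "m \<le> 1" by (rule L_ge)
          then show False using m2 by simp
        qed
      qed
      then have l: "(f ^^ (k - i)) c \<noteq> \<alpha>" using e True by simp
      have r: "\<not> i < k - m" using True m2 i by linarith
      show ?thesis using l r by blast
    next
      case False
      then have "(f ^^ (k - i)) c = (f ^^ (k - i - 1)) v1" using e Vn[OF fcV[OF c]] by simp
      then have l: "(f ^^ (k - i)) c = \<alpha> \<longleftrightarrow> m \<le> k - i - 1" using orbit_iff by simp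
      have r: "m \<le> k - i - 1 \<longleftrightarrow> i < k - m" using i m2 by linarith
      show ?thesis using l r by blast
    qed
  qed
  show ?thesis
  proof (rule set_eqI)
    fix x :: "nat \<times> sphere"
    obtain i c where x: "x = (i, c)" by fastforce
    show "x \<in> T \<alpha> \<longleftrightarrow> x \<in> {..<k - m} \<times> {c1, c2}"
    proof
      assume "x \<in> T \<alpha>"
      then have h: "i < k" "c \<in> {c1, c2}" "(f ^^ (k - i)) c = \<alpha>" unfolding T_def x by auto
      then have "i < k - m" using key by blast
      then show "x \<in> {..<k - m} \<times> {c1, c2}" using h x by simp
    next
      assume "x \<in> {..<k - m} \<times> {c1, c2}"
      then have h: "i < k - m" "c \<in> {c1, c2}" using x by auto
      then have ik: "i < k" by linarith
      then have "(f ^^ (k - i)) c = \<alpha>" using key h by blast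
      then show "x \<in> T \<alpha>" unfolding T_def x using ik h by simp
    qed
  qed
qed

lemma T_other: "z \<notin> {v1, v2, f v1} \<Longrightarrow> T z \<subseteq> {..<k - 2} \<times> {c1, c2}"
proof
  fix x assume z: "z \<notin> {v1, v2, f v1}" and x: "x \<in> T z"
  then obtain i c where xe: "x = (i, c)" and i: "i < k" "c \<in> {c1, c2}" "(f ^^ (k - i)) c = z"
    unfolding T_def by auto
  have e: "(f ^^ (k - i - 1)) (f c) = z" using i orb_c by simp
  have "k - i - 1 \<noteq> 0"
  proof
    assume "k - i - 1 = 0"
    then have "z = f c" using e by simp
    then have "z \<in> {v1, v2}" using fcV[OF i(2)] by simp
    then show False using z by simp
  qed
  moreover have "k - i - 1 \<noteq> 1"
  proof
    assume "k - i - 1 = 1"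
    then have "z = f (f c)" using e by simp
    also have "f (f c) = f v1" using fcV[OF i(2)] fv by auto
    finally show False using z by simp
  qed
  ultimately have "i < k - 2" by linarith
  then show "x \<in> {..<k - 2} \<times> {c1, c2}" using xe i by simp
qed


lemma cif: "crit_in_fiber f k z = (\<Sum>x\<in>T z. 2 ^ fst x)"
  unfolding crit_in_fiber_def by (rule card_S)

lemma cif_beta: "1 \<le> j \<Longrightarrow> j \<le> m - 1 \<Longrightarrow> crit_in_fiber f k ((f ^^ j) v1) = 2 ^ (k - j)"
proof -
  assume j: "1 \<le> j" "j \<le> m - 1"
  have "crit_in_fiber f k ((f ^^ j) v1) = 2 * 2 ^ (k - j - 1)"
    unfolding cif T_beta[OF j] by (subst sumC) auto
  also have "\<dots> = 2 ^ (k - j)"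
  proof -
    have "k - j = Suc (k - j - 1)" using j km by linarith
    then show ?thesis by (metis power_Suc)
  qed
  finally show ?thesis .
qed

lemma cif_V: "c \<in> {c1, c2} \<Longrightarrow> crit_in_fiber f k (f c) = 2 ^ (k - 1)"
  unfolding cif T_V by simp

lemma cif_other: "z \<notin> {v1, v2, f v1} \<Longrightarrow> crit_in_fiber f k z < 2 ^ (k - 1)"
proof -
  assume z: "z \<notin> {v1, v2, f v1}"
  have "crit_in_fiber f k z \<le> (\<Sum>x\<in>{..<k - 2} \<times> {c1, c2}. 2 ^ fst x)"
    unfolding cif by (rule sum_mono2) (use T_other[OF z] in auto)
  also have "\<dots> = 2 * (2 ^ (k - 2) - 1)" by (subst sumC) (auto simp: sum_pow2)
  also have "\<dots> < 2 ^ (k - 1)"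
  proof -
    have "k - 1 = Suc (k - 2)" using km m2 by linarith
    moreover have "(1::nat) \<le> 2 ^ (k - 2)" by simp
    ultimately show ?thesis by simp
  qed
  finally show ?thesis .
qed

lemma cif_alpha: "crit_in_fiber f k \<alpha> = 2 ^ (k - (m - 1)) - 2"
proof -
  have "crit_in_fiber f k \<alpha> = 2 * (2 ^ (k - m) - 1)"
    unfolding cif T_alpha by (subst sumC) (auto simp: sum_pow2)
  also have "\<dots> = 2 ^ (k - (m - 1)) - 2"
  proof -
    have "k - (m - 1) = Suc (k - m)" using km m2 by linarith
    moreover have "(1::nat) \<le> 2 ^ (k - m)" by simp
    ultimately show ?thesis by (simp add: diff_mult_distrib2)
  qed
  finally show ?thesis .
qed

lemma result:
  "(\<forall>z. crit_in_fiber f k z = 2 ^ (k - 1) \<longleftrightarrow> z \<in> {v1, v2, f v1}) \<and>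
   (\<forall>j \<in> {2..m-1}. crit_in_fiber f k ((f ^^ j) v1) = 2 ^ (k - j)) \<and>
   crit_in_fiber f k \<alpha> = 2 ^ (k - (m - 1)) - 2"
proof (intro conjI allI ballI)
  fix z
  show "crit_in_fiber f k z = 2 ^ (k - 1) \<longleftrightarrow> z \<in> {v1, v2, f v1}"
  proof
    assume "crit_in_fiber f k z = 2 ^ (k - 1)"
    then show "z \<in> {v1, v2, f v1}" using cif_other by fastforce
  next
    assume "z \<in> {v1, v2, f v1}"
    moreover have "crit_in_fiber f k v1 = 2 ^ (k - 1)" using cif_V[of c1] cc1 by simp
    moreover have "crit_in_fiber f k v2 = 2 ^ (k - 1)" using cif_V[of c2] cc2 by simp
    moreover have "crit_in_fiber f k (f v1) = 2 ^ (k - 1)" using cif_beta[of 1] m2 by simp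
    ultimately show "crit_in_fiber f k z = 2 ^ (k - 1)" by auto
  qed
next
  fix j assume "j \<in> {2..m-1}"
  then show "crit_in_fiber f k ((f ^^ j) v1) = 2 ^ (k - j)" using cif_beta by simp
next
  show "crit_in_fiber f k \<alpha> = 2 ^ (k - (m - 1)) - 2" by (rule cif_alpha)
qed

end


theorem mainTheorem19:
  fixes f :: "sphere \<Rightarrow> sphere" and v1 v2 \<alpha> :: sphere and m k :: nat
  assumes "quadratic_rational_map f"
    and "{v. critical_value f v} = {v1, v2}" and "v1 \<noteq> v2"
    and "f v1 = f v2"
    and "f \<alpha> = \<alpha>" and "\<exists>n. (f ^^ n) v1 = \<alpha>"
    and "m = (LEAST n. (f ^^ n) v1 = \<alpha>)" and "m > 2"
    and "k > m"
  shows "(\<forall>z. crit_in_fiber f k z = 2 ^ (k - 1) \<longleftrightarrow> z \<in> {v1, v2, f v1}) \<and>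
         (\<forall>j \<in> {2..m-1}. crit_in_fiber f k ((f ^^ j) v1) = 2 ^ (k - j)) \<and>
         crit_in_fiber f k \<alpha> = 2 ^ (k - (m - 1)) - 2"
proof -
  obtain p0 p1 p2 q0 q1 q2 where Q: "qr p0 p1 p2 q0 q1 q2" and fe: "f = qr.f p0 p1 p2 q0 q1 q2"
    using qrm_to_qr[OF assms(1)] by blast
  have G: "good f" unfolding fe by (rule qr.good_f[OF Q])
  have FC: "\<And>c. critical_point f c \<Longrightarrow> {w. f w = f c} = {c}" unfolding fe by (rule qr.fibre_crit[OF Q])
  have FN: "\<And>y. \<not> critical_value f y \<Longrightarrow> finite {w. f w = y} \<and> card {w. f w = y} = 2"
    unfolding fe by (rule qr.fibre_noncrit[OF Q])
  have "v1 \<in> {v. critical_value f v}" "v2 \<in> {v. critical_value f v}" unfolding assms(2) by simp_all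
  then have "critical_value f v1" "critical_value f v2" by simp_all
  then obtain c1 c2 where c1: "critical_point f c1" "f c1 = v1" and c2: "critical_point f c2" "f c2 = v2"
    unfolding critical_value_def by blast
  have C: "comb f v1 v2 \<alpha> c1 c2 m k"
  proof (rule comb.intro)
    show "good f" by (rule G)
    show "\<And>c. critical_point f c \<Longrightarrow> {w. f w = f c} = {c}" by (rule FC)
    show "\<And>y. \<not> critical_value f y \<Longrightarrow> finite {w. f w = y} \<and> card {w. f w = y} = 2" by (rule FN)
  qed (fact assms(2-9) c1 c2)+
  show ?thesis by (rule comb.result[OF C])
qed

end
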